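(* Let $\mathcal{M}$ be a linkage $(n,d)$-tope field of type $v$ and thickness $k<n$, and let $i\in[d]$. Then the $i$-amalgamation of $\mathcal{M}$ is a linkage tope field of type $v+e_i$.
   Context: $L=\{\ell_1,\dots,\ell_n\}$, $R=\{r_1,\dots,r_d\}$; graphs are bipartite on $L\sqcup R$, identified with edge sets. For $v\in\mathbb{Z}_{>0}^d$ with $k=\sum v_i\le n$ and a $k$-subset $\sigma\subseteq L$, a tope of type $v$ on $\sigma$ is a graph with left degree vector the indicator vector $\mathbf{1}_\sigma$ and right degree vector $v$. An $(n,d)$-tope field of type $v$ is a family $(M_\sigma)$ with one tope of type $v$ on $\sigma$ for each $k$-subset $\sigma\subseteq L$. It is linkage if for every $(k+1)$-subset $\tau\subseteq L$ the union $C_\tau$ of the $M_\sigma$ with $\sigma\subset\tau$ is a tree on the node set $\tau\sqcup R$ (the linkage covector). For a linkage tope field, each $C_\tau$ contains a unique subgraph $G_\tau$ which is a tope of type $v+e_i$ on $\tau$; the family $(G_\tau)_{\tau}$, over all $(k+1)$-subsets $\tau$, is the $i$-amalgamation, a tope field of type $v+e_i$. *)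

theory Defs
  imports Main
begin

text \<open>Left nodes are l_1..l_n encoded as 0..<n, right nodes r_1..r_d as 0..<d.
  A bipartite graph on L \<sqcup> R is a set of edges (l, r) :: nat \<times> nat.\<close>

definition ldeg :: "(nat \<times> nat) set \<Rightarrow> nat \<Rightarrow> nat" where
  "ldeg G l = card {r. (l, r) \<in> G}"

definition rdeg :: "(nat \<times> nat) set \<Rightarrow> nat \<Rightarrow> nat" where
  "rdeg G r = card {l. (l, r) \<in> G}"

definition is_tope :: "nat \<Rightarrow> nat \<Rightarrow> (nat \<Rightarrow> nat) \<Rightarrow> nat set \<Rightarrow> (nat \<times> nat) set \<Rightarrow> bool" where
  "is_tope n d v \<sigma> G \<longleftrightarrow>
     G \<subseteq> {0..<n} \<times> {0..<d} \<and>
     (\<forall>l<n. ldeg G l = (if l \<in> \<sigma> then 1 else 0)) \<and>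
     (\<forall>r<d. rdeg G r = v r)"

definition valid_type :: "nat \<Rightarrow> nat \<Rightarrow> (nat \<Rightarrow> nat) \<Rightarrow> bool" where
  "valid_type n d v \<longleftrightarrow> (\<forall>j<d. 0 < v j) \<and> (\<Sum>j<d. v j) \<le> n"

definition thickness :: "nat \<Rightarrow> (nat \<Rightarrow> nat) \<Rightarrow> nat" where
  "thickness d v = (\<Sum>j<d. v j)"

definition tope_field :: "nat \<Rightarrow> nat \<Rightarrow> (nat \<Rightarrow> nat) \<Rightarrow> (nat set \<Rightarrow> (nat \<times> nat) set) \<Rightarrow> bool" where
  "tope_field n d v M \<longleftrightarrow> valid_type n d v \<and>
     (\<forall>\<sigma>. \<sigma> \<subseteq> {0..<n} \<and> card \<sigma> = thickness d v \<longrightarrow> is_tope n d v \<sigma> (M \<sigma>))"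

definition badj :: "(nat \<times> nat) set \<Rightarrow> nat + nat \<Rightarrow> nat + nat \<Rightarrow> bool" where
  "badj E x y \<longleftrightarrow> (\<exists>l r. (l, r) \<in> E \<and>
      ((x = Inl l \<and> y = Inr r) \<or> (x = Inr r \<and> y = Inl l)))"

definition is_tree_on :: "(nat + nat) set \<Rightarrow> (nat \<times> nat) set \<Rightarrow> bool" where
  "is_tree_on V E \<longleftrightarrow>
     V \<noteq> {} \<and>
     (\<forall>(l, r) \<in> E. Inl l \<in> V \<and> Inr r \<in> V) \<and>
     (\<forall>x\<in>V. \<forall>y\<in>V. (x, y) \<in> {(a, b). badj E a b}\<^sup>*) \<and>
     \<not> (\<exists>cs. 3 \<le> length cs \<and> distinct cs \<and> set cs \<subseteq> V \<and>
           (\<forall>j < length cs. badj E (cs ! j) (cs ! ((j + 1) mod length cs))))"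

definition linkage_covector :: "nat \<Rightarrow> nat \<Rightarrow> (nat \<Rightarrow> nat) \<Rightarrow> (nat set \<Rightarrow> (nat \<times> nat) set) \<Rightarrow> nat set \<Rightarrow> (nat \<times> nat) set" where
  "linkage_covector n d v M \<tau> = \<Union>{M \<sigma> | \<sigma>. \<sigma> \<subset> \<tau> \<and> card \<sigma> = thickness d v}"

definition linkage_tope_field :: "nat \<Rightarrow> nat \<Rightarrow> (nat \<Rightarrow> nat) \<Rightarrow> (nat set \<Rightarrow> (nat \<times> nat) set) \<Rightarrow> bool" where
  "linkage_tope_field n d v M \<longleftrightarrow> tope_field n d v M \<and>
     (\<forall>\<tau>. \<tau> \<subseteq> {0..<n} \<and> card \<tau> = thickness d v + 1 \<longrightarrow>
        is_tree_on (Inl ` \<tau> \<union> Inr ` {0..<d}) (linkage_covector n d v M \<tau>))"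

definition amalgamation :: "nat \<Rightarrow> nat \<Rightarrow> (nat \<Rightarrow> nat) \<Rightarrow> (nat set \<Rightarrow> (nat \<times> nat) set) \<Rightarrow> nat \<Rightarrow> nat set \<Rightarrow> (nat \<times> nat) set" where
  "amalgamation n d v M i \<tau> =
     (THE G. G \<subseteq> linkage_covector n d v M \<tau> \<and> is_tope n d (v(i := v i + 1)) \<tau> G)"

end

theory Submission
  imports Defs
begin

definition has_cycle :: "('a \<Rightarrow> 'a \<Rightarrow> bool) \<Rightarrow> 'a set \<Rightarrow> bool" where
  "has_cycle R V \<longleftrightarrow> (\<exists>cs. 3 \<le> length cs \<and> distinct cs \<and> set cs \<subseteq> V \<and>
       (\<forall>j < length cs. R (cs ! j) (cs ! ((j + 1) mod length cs))))"

lemma badj_irrefl: "\<not> badj E x x" by (auto simp: badj_def)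
lemma badj_sym: "badj E x y \<Longrightarrow> badj E y x" by (auto simp: badj_def)
lemma badj_LR[simp]: "badj E (Inl l) (Inr r) \<longleftrightarrow> (l,r) \<in> E" by (auto simp: badj_def)
lemma badj_RL[simp]: "badj E (Inr r) (Inl l) \<longleftrightarrow> (l,r) \<in> E" by (auto simp: badj_def)
lemma badj_LL[simp]: "\<not> badj E (Inl a) (Inl b)" by (auto simp: badj_def)
lemma badj_RR[simp]: "\<not> badj E (Inr a) (Inr b)" by (auto simp: badj_def)

lemma walk_cycle:
  assumes fin: "finite V" and inV: "\<And>m. w m \<in> V"
    and adj: "\<And>m. R (w m) (w (Suc m))"
    and nb: "\<And>m. w (Suc (Suc m)) \<noteq> w m"
    and irr: "\<And>x. \<not> R x x"
  shows "has_cycle R V"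
proof -
  have "\<not> inj w"
  proof
    assume "inj w"
    then have "infinite (range w)" using finite_imageD infinite_UNIV_nat by blast
    moreover have "range w \<subseteq> V" using inV by auto
    ultimately show False using fin finite_subset by blast
  qed
  then obtain x y where xy: "x \<noteq> y" "w x = w y" unfolding inj_def by blast
  have ex: "\<exists>t. \<exists>s<t. w s = w t"
  proof (cases "x < y")
    case True then show ?thesis using xy by blast
  next
    case False then have "y < x" using xy by simp
    then show ?thesis using xy by metis
  qed
  define t0 where "t0 = (LEAST t. \<exists>s<t. w s = w t)"
  have P0: "\<exists>s<t0. w s = w t0" unfolding t0_def by (rule LeastI_ex[OF ex])
  have minim: "\<And>t s. t < t0 \<Longrightarrow> s < t \<Longrightarrow> w s \<noteq> w t"
    using not_less_Least unfolding t0_def by blast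
  obtain s0 where s0: "s0 < t0" "w s0 = w t0" using P0 by blast
  define cs where "cs = map w [s0..<t0]"
  have len: "length cs = t0 - s0" unfolding cs_def by simp
  have nth: "\<And>j. j < t0 - s0 \<Longrightarrow> cs ! j = w (s0 + j)" unfolding cs_def by simp
  have injw: "inj_on w {s0..<t0}"
  proof (rule inj_onI)
    fix a b assume "a \<in> {s0..<t0}" "b \<in> {s0..<t0}" "w a = w b"
    then show "a = b" using minim by (metis atLeastLessThan_iff linorder_neqE_nat)
  qed
  have dist: "distinct cs" unfolding cs_def using injw by (simp add: distinct_map)
  have ne1: "t0 - s0 \<noteq> 1"
  proof
    assume "t0 - s0 = 1" then have "t0 = Suc s0" using s0 by simp
    then show False using adj[of s0] s0 irr by metis
  qed
  have ne2: "t0 - s0 \<noteq> 2"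
  proof
    assume "t0 - s0 = 2" then have "t0 = Suc (Suc s0)" using s0 by simp
    then show False using nb[of s0] s0 by metis
  qed
  have len3: "3 \<le> length cs" using len ne1 ne2 s0 by linarith
  have setcs: "set cs \<subseteq> V" unfolding cs_def using inV by auto
  have cyc: "\<forall>j < length cs. R (cs ! j) (cs ! ((j + 1) mod length cs))"
  proof (intro allI impI)
    fix j assume j: "j < length cs"
    show "R (cs ! j) (cs ! ((j + 1) mod length cs))"
    proof (cases "j + 1 < length cs")
      case True
      then show ?thesis using nth len j adj[of "s0 + j"] by simp
    next
      case False
      then have "j + 1 = length cs" using j by simp
      then have "(j + 1) mod length cs = 0" by simp
      moreover have "cs ! 0 = w t0" using nth[of 0] len3 len s0 by simp
      moreover have "Suc (s0 + j) = t0" using \<open>j + 1 = length cs\<close> len s0 by simp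
      then have "w (Suc (s0 + j)) = w t0" by simp
      ultimately show ?thesis using nth j len adj[of "s0 + j"] by simp
    qed
  qed
  show ?thesis unfolding has_cycle_def using len3 dist setcs cyc by blast
qed

lemma cycle_vertex_deg2:
  assumes "3 \<le> length cs" "distinct cs" "\<forall>j < length cs. R (cs ! j) (cs ! ((j + 1) mod length cs))"
    and sym: "\<And>a b. R a b \<Longrightarrow> R b a" and "x \<in> set cs"
  shows "\<exists>y z. y \<noteq> z \<and> R x y \<and> R x z"
proof -
  let ?L = "length cs"
  obtain p where p: "p < ?L" "cs ! p = x" using assms(5) by (metis in_set_conv_nth)
  define q where "q = (if p = 0 then ?L - 1 else p - 1)"
  have q: "q < ?L" unfolding q_def using p assms(1) by auto
  have qn: "(q + 1) mod ?L = p" unfolding q_def using p assms(1) by auto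
  have R1: "R x (cs ! ((p + 1) mod ?L))" using assms(3) p by auto
  have "R (cs ! q) (cs ! p)" using assms(3)[rule_format, OF q] qn by simp
  then have R2: "R x (cs ! q)" using p sym by blast
  have neq: "(p + 1) mod ?L \<noteq> q"
  proof (cases "p + 1 < ?L")
    case True then show ?thesis unfolding q_def using assms(1) by auto
  next
    case False then have pL: "p = ?L - 1" using p by simp
    then have "Suc p = ?L" using assms(1) by simp
    then have "(p + 1) mod ?L = 0" by simp
    moreover have "q = ?L - 2" unfolding q_def using pL assms(1) by simp
    ultimately show ?thesis using assms(1) by simp
  qed
  have "0 < ?L" using assms(1) by linarith
  then have lt: "(p + 1) mod ?L < ?L" by (rule mod_less_divisor)
  have "cs ! ((p + 1) mod ?L) \<noteq> cs ! q"
    using nth_eq_iff_index_eq[OF assms(2) lt q] neq by simp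
  then show ?thesis using R1 R2 by blast
qed

lemma conn_count_acyclic:
  assumes "finite V" "\<And>a b. R a b \<Longrightarrow> a \<in> V \<and> b \<in> V" "\<And>a b. R a b \<Longrightarrow> R b a" "\<And>a. \<not> R a a"
    "\<forall>x\<in>V. \<forall>y\<in>V. (x,y) \<in> {(a,b). R a b}\<^sup>*"
    "card {(a,b). R a b} < 2 * card V"
  shows "\<not> has_cycle R V"
  using assms
proof (induction "card V" arbitrary: V R rule: less_induct)
  case less
  note fin = less.prems(1) and inV = less.prems(2) and sym = less.prems(3) and irr = less.prems(4)
    and conn = less.prems(5) and cnt = less.prems(6)
  show ?case
  proof
    assume hc: "has_cycle R V"
    then obtain cs where cs: "3 \<le> length cs" "distinct cs" "set cs \<subseteq> V"
      "\<forall>j < length cs. R (cs ! j) (cs ! ((j + 1) mod length cs))"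
      unfolding has_cycle_def by blast
    let ?D = "{(a,b). R a b}"
    have Dsub: "?D \<subseteq> V \<times> V" using inV by auto
    have finD: "finite ?D" using finite_subset[OF Dsub] fin by auto
    have Dsig: "?D = Sigma V (\<lambda>x. {y. R x y})" using inV by auto
    have finnb: "\<And>x. finite {y. R x y}"
      using inV fin by (metis (no_types, lifting) finite_subset mem_Collect_eq subsetI)
    have sumdeg: "card ?D = (\<Sum>x\<in>V. card {y. R x y})"
      using Dsig card_SigmaI[OF fin, of "\<lambda>x. {y. R x y}"] finnb by simp
    have "\<exists>x\<in>V. card {y. R x y} \<le> 1"
    proof (rule ccontr)
      assume "\<not> ?thesis"
      then have "\<forall>x\<in>V. 2 \<le> card {y. R x y}" by auto
      then have "(\<Sum>x\<in>V. (2::nat)) \<le> (\<Sum>x\<in>V. card {y. R x y})" by (intro sum_mono) auto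
      then show False using sumdeg cnt by simp
    qed
    then obtain x where x: "x \<in> V" "card {y. R x y} \<le> 1" by blast
    have xnot: "x \<notin> set cs"
    proof
      assume "x \<in> set cs"
      then obtain y z where "y \<noteq> z" "R x y" "R x z" using cycle_vertex_deg2[OF cs(1,2,4)] sym by blast
      then have "{y, z} \<subseteq> {y. R x y}" by auto
      then have "card {y, z} \<le> card {y. R x y}" using finnb card_mono by blast
      then show False using \<open>y \<noteq> z\<close> x(2) by simp
    qed
    obtain c where c: "c \<in> set cs" using cs(1) by (cases cs) auto
    have "c \<in> V" "c \<noteq> x" using c cs(3) xnot by auto
    then have "(x, c) \<in> {(a,b). R a b}\<^sup>*" using conn x(1) by blast
    then obtain y0 where y0: "R x y0"
      using \<open>c \<noteq> x\<close> by (metis (no_types, lifting) case_prodD converse_rtranclE mem_Collect_eq)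
    have nb1: "{y. R x y} = {y0}"
    proof -
      have "y0 \<in> {y. R x y}" using y0 by simp
      moreover have "card {y. R x y} = 1" using x(2) y0 finnb
        by (metis (no_types, lifting) card_0_eq empty_iff le_antisym less_one linorder_not_less mem_Collect_eq)
      ultimately show ?thesis by (metis card_1_singletonE singletonD)
    qed
    then have uniq: "\<And>y. R x y \<Longrightarrow> y = y0" by auto
    have xy0: "x \<noteq> y0" using y0 irr by auto
    define V' where "V' = V - {x}"
    define R' where "R' = (\<lambda>a b. R a b \<and> a \<noteq> x \<and> b \<noteq> x)"
    have cardV': "card V' < card V" unfolding V'_def using x(1) fin by (meson card_Diff1_less)
    have D'eq: "?D = {(a,b). R' a b} \<union> {(x,y0), (y0,x)}"
    proof -
      have "\<And>a b. R a b \<longleftrightarrow> (R' a b \<or> (a,b) = (x,y0) \<or> (a,b) = (y0,x))"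
        unfolding R'_def using uniq sym y0 by blast
      then show ?thesis by auto
    qed
    have disj: "{(a,b). R' a b} \<inter> {(x,y0), (y0,x)} = {}" unfolding R'_def by auto
    have "card ?D = card {(a,b). R' a b} + 2"
    proof -
      have f1: "finite {(a,b). R' a b}" using finD unfolding R'_def
        by (rule rev_finite_subset) auto
      have "card ({(a,b). R' a b} \<union> {(x,y0), (y0,x)}) = card {(a,b). R' a b} + card {(x,y0), (y0,x)}"
        by (rule card_Un_disjoint) (use f1 disj in auto)
      then have "card ?D = card {(a,b). R' a b} + card {(x,y0), (y0,x)}"
        using D'eq by simp
      then show ?thesis using xy0 by simp
    qed
    then have cnt': "card {(a,b). R' a b} < 2 * card V'"
      using cnt x(1) fin unfolding V'_def by (simp add: card_Diff_singleton)
    have conn': "\<forall>a\<in>V'. \<forall>b\<in>V'. (a,b) \<in> {(a,b). R' a b}\<^sup>*"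
    proof (intro ballI)
      fix a b assume a: "a \<in> V'" and b: "b \<in> V'"
      have ab: "(a,b) \<in> {(a,b). R a b}\<^sup>*" using conn a b unfolding V'_def by auto
      have "\<And>z. (a,z) \<in> {(a,b). R a b}\<^sup>* \<Longrightarrow>
          (z \<noteq> x \<longrightarrow> (a,z) \<in> {(a,b). R' a b}\<^sup>*) \<and> (z = x \<longrightarrow> (a,y0) \<in> {(a,b). R' a b}\<^sup>*)"
      proof -
        fix z assume "(a,z) \<in> {(a,b). R a b}\<^sup>*"
        then show "(z \<noteq> x \<longrightarrow> (a,z) \<in> {(a,b). R' a b}\<^sup>*) \<and> (z = x \<longrightarrow> (a,y0) \<in> {(a,b). R' a b}\<^sup>*)"
        proof (induction rule: rtrancl_induct)
          case base then show ?case using a unfolding V'_def by auto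
        next
          case (step z z')
          have Rzz': "R z z'" using step.hyps(2) by simp
          show ?case
          proof (intro conjI impI)
            assume z'x: "z' \<noteq> x"
            show "(a, z') \<in> {(a,b). R' a b}\<^sup>*"
            proof (cases "z = x")
              case True
              then have "z' = y0" using uniq Rzz' by simp
              then show ?thesis using step.IH True by simp
            next
              case False
              then have "(a,z) \<in> {(a,b). R' a b}\<^sup>*" using step.IH by simp
              moreover have "R' z z'" unfolding R'_def using Rzz' False z'x by simp
              ultimately show ?thesis by (simp add: rtrancl_into_rtrancl)
            qed
          next
            assume z'x: "z' = x"
            then have "R x z" using sym Rzz' by blast
            then have "z = y0" using uniq by simp
            moreover have "z \<noteq> x" using z'x Rzz' irr by auto
            ultimately show "(a, y0) \<in> {(a,b). R' a b}\<^sup>*" using step.IH by simp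
          qed
        qed
      qed
      then show "(a,b) \<in> {(a,b). R' a b}\<^sup>*" using ab b unfolding V'_def by auto
    qed
    have "\<not> has_cycle R' V'"
    proof (rule less.hyps[OF cardV'])
      show "finite V'" unfolding V'_def using fin by simp
      show "\<And>a b. R' a b \<Longrightarrow> a \<in> V' \<and> b \<in> V'" unfolding R'_def V'_def using inV by auto
      show "\<And>a b. R' a b \<Longrightarrow> R' b a" unfolding R'_def using sym by blast
      show "\<And>a. \<not> R' a a" unfolding R'_def using irr by auto
      show "\<forall>a\<in>V'. \<forall>b\<in>V'. (a,b) \<in> {(a,b). R' a b}\<^sup>*" by (rule conn')
      show "card {(a,b). R' a b} < 2 * card V'" by (rule cnt')
    qed
    moreover have "has_cycle R' V'"
      unfolding has_cycle_def
    proof (intro exI conjI)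
      show "3 \<le> length cs" "distinct cs" using cs by auto
      show "set cs \<subseteq> V'" using cs(3) xnot unfolding V'_def by auto
      show "\<forall>j < length cs. R' (cs ! j) (cs ! ((j + 1) mod length cs))"
      proof (intro allI impI)
        fix j assume j: "j < length cs"
        have "0 < length cs" using j by linarith
        then have "(j + 1) mod length cs < length cs" by (rule mod_less_divisor)
        then have "cs ! ((j + 1) mod length cs) \<noteq> x" "cs ! j \<noteq> x" using xnot j by (auto simp: nth_mem)
        then show "R' (cs ! j) (cs ! ((j + 1) mod length cs))" unfolding R'_def using cs(4) j by auto
      qed
    qed
    ultimately show False by simp
  qed
qed

definition lfun :: "(nat \<times> nat) set \<Rightarrow> nat set \<Rightarrow> bool" where
  "lfun G S \<longleftrightarrow> (\<forall>l r. (l,r) \<in> G \<longrightarrow> l \<in> S) \<and> (\<forall>l\<in>S. \<exists>!r. (l,r) \<in> G)"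

definition fib :: "(nat \<times> nat) set \<Rightarrow> nat \<Rightarrow> nat set" where
  "fib G r = {l. (l,r) \<in> G}"

lemma fib_finite: "finite A \<Longrightarrow> finite (fib A r)"
proof -
  assume "finite A"
  moreover have "fib A r \<subseteq> fst ` A" unfolding fib_def by force
  ultimately show ?thesis by (meson finite_imageI finite_subset)
qed

lemma lfib_finite: "finite A \<Longrightarrow> finite {r. (l,r) \<in> A}"
proof -
  assume "finite A"
  moreover have "{r. (l,r) \<in> A} \<subseteq> snd ` A" by force
  ultimately show ?thesis by (meson finite_imageI finite_subset)
qed

lemma unique_sub:
  assumes finV: "finite V" and TV: "\<forall>(l,r)\<in>T. Inl l \<in> V \<and> Inr r \<in> V"
    and acyc: "\<not> has_cycle (badj T) V"
    and AT: "A \<subseteq> T" and BT: "B \<subseteq> T" and lA: "lfun A S" and lB: "lfun B S"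
    and fA: "finite A" and fB: "finite B"
    and deg: "\<And>r. card (fib A r) = card (fib B r)"
  shows "A = B"
proof (rule ccontr)
  assume AB: "A \<noteq> B"
  have key: "\<And>l r. (l,r) \<in> A - B \<Longrightarrow> \<exists>l'. (l',r) \<in> B - A"
  proof (rule ccontr)
    fix l r assume lr: "(l,r) \<in> A - B" and nex: "\<not> (\<exists>l'. (l',r) \<in> B - A)"
    have "fib B r \<subseteq> fib A r" using nex unfolding fib_def by auto
    moreover have "l \<in> fib A r - fib B r" using lr unfolding fib_def by auto
    ultimately have "fib B r \<subset> fib A r" by auto
    moreover have "finite (fib A r)" using fA by (rule fib_finite)
    ultimately have "card (fib B r) < card (fib A r)" by (simp add: psubset_card_mono)
    then show False using deg[of r] by simp
  qed
  have ex0: "\<exists>e. e \<in> A - B"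
  proof (rule ccontr)
    assume "\<not> ?thesis"
    then have "A \<subseteq> B" by auto
    then obtain l r where lr: "(l,r) \<in> B - A" using AB by auto
    then have "l \<in> S" using lB unfolding lfun_def by auto
    then obtain r' where "(l,r') \<in> A" using lA unfolding lfun_def by auto
    then have "(l,r') \<in> B" using \<open>A \<subseteq> B\<close> by auto
    then have "r' = r" using lB lr \<open>l \<in> S\<close> unfolding lfun_def by auto
    then show False using \<open>(l,r') \<in> A\<close> lr by auto
  qed
  then obtain l0 r0 where l0: "(l0,r0) \<in> A - B" by auto
  define aof where "aof l = (THE r. (l,r) \<in> A)" for l
  have ex1: "\<And>l. l \<in> S \<Longrightarrow> \<exists>!r. (l,r) \<in> A" using lA unfolding lfun_def by blast
  have aofI: "\<And>l. l \<in> S \<Longrightarrow> (l, aof l) \<in> A"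
    unfolding aof_def by (rule theI', erule ex1)
  have aofU: "\<And>l r. l \<in> S \<Longrightarrow> (l,r) \<in> A \<Longrightarrow> aof l = r"
    unfolding aof_def by (rule the1_equality, erule ex1)
  have Bu: "\<And>l r r'. (l,r) \<in> B \<Longrightarrow> (l,r') \<in> B \<Longrightarrow> r = r'"
    using lB unfolding lfun_def by blast
  define nxt where "nxt l = (SOME l'. (l', aof l) \<in> B - A)" for l
  define sq where "sq = rec_nat l0 (\<lambda>_ l. nxt l)"
  have sq0: "sq 0 = l0" unfolding sq_def by simp
  have sqS: "\<And>t. sq (Suc t) = nxt (sq t)" unfolding sq_def by simp
  have l0S: "l0 \<in> S" using l0 lA unfolding lfun_def by auto
  have inv: "\<And>t. sq t \<in> S \<and> (sq t, aof (sq t)) \<in> A - B"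
  proof -
    fix t show "sq t \<in> S \<and> (sq t, aof (sq t)) \<in> A - B"
    proof (induction t)
      case 0 then show ?case using l0 l0S aofU[OF l0S] sq0 by auto
    next
      case (Suc t)
      let ?r = "aof (sq t)"
      obtain l' where "(l', ?r) \<in> B - A" using key Suc.IH by blast
      then have nx: "(nxt (sq t), ?r) \<in> B - A" unfolding nxt_def by (rule someI)
      then have S1: "nxt (sq t) \<in> S" using lB unfolding lfun_def by auto
      have A1: "(nxt (sq t), aof (nxt (sq t))) \<in> A" using aofI[OF S1] .
      have "aof (nxt (sq t)) \<noteq> ?r" using A1 nx by auto
      then have "(nxt (sq t), aof (nxt (sq t))) \<notin> B" using Bu nx by blast
      then show ?case using S1 A1 sqS by simp
    qed
  qed
  have stepB: "\<And>t. (sq (Suc t), aof (sq t)) \<in> B - A"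
  proof -
    fix t
    obtain l' where "(l', aof (sq t)) \<in> B - A" using key inv by blast
    then show "(sq (Suc t), aof (sq t)) \<in> B - A" unfolding sqS nxt_def by (rule someI)
  qed
  define wk where "wk m = (if even m then Inl (sq (m div 2)) else Inr (aof (sq (m div 2))))" for m
  have wk0: "\<And>t. wk (2*t) = Inl (sq t)" unfolding wk_def by simp
  have wk1: "\<And>t. wk (Suc (2*t)) = Inr (aof (sq t))" unfolding wk_def by simp
  have wk2: "wk (Suc (Suc (2*t))) = Inl (sq (Suc t))" for t
    using wk0[of "Suc t"] by simp
  have wk3: "wk (Suc (Suc (Suc (2*t)))) = Inr (aof (sq (Suc t)))" for t
    using wk1[of "Suc t"] by simp
  have mcases: "\<And>m. \<exists>t. m = 2*t \<or> m = Suc (2*t)" by presburger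
  show False
  proof -
    have "has_cycle (badj T) V"
    proof (rule walk_cycle[OF finV])
      fix m
      obtain t where t: "m = 2*t \<or> m = Suc (2*t)" using mcases by blast
      have eA: "(sq t, aof (sq t)) \<in> T" using inv AT by blast
      have eB: "(sq (Suc t), aof (sq t)) \<in> T" using stepB BT by blast
      show "wk m \<in> V" using t TV eA wk0 wk1 by auto
      show "badj T (wk m) (wk (Suc m))" using t eA eB wk0 wk1 wk2 by auto
      show "wk (Suc (Suc m)) \<noteq> wk m"
      proof -
        have n1: "sq (Suc t) \<noteq> sq t" using stepB[of t] inv[of t] by auto
        have n2: "aof (sq (Suc t)) \<noteq> aof (sq t)" using stepB[of t] inv[of "Suc t"] by auto
        show ?thesis using t n1 n2 wk0 wk1 wk2 wk3 by auto
      qed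
    next
      show "\<And>x. \<not> badj T x x" by (rule badj_irrefl)
    qed
    then show False using acyc by simp
  qed
qed

lemma card_symdiff:
  assumes "finite X" "finite Y"
  shows "card ((X - Y) \<union> (Y - X)) + 2 * card (X \<inter> Y) = card X + card Y"
proof -
  have a: "card X = card (X - Y) + card (X \<inter> Y)"
    using card_Int_Diff[OF assms(1), of Y] by simp
  have b: "card Y = card (Y - X) + card (X \<inter> Y)"
    using card_Int_Diff[OF assms(2), of X] by (simp add: Int_commute)
  have c: "card ((X - Y) \<union> (Y - X)) = card (X - Y) + card (Y - X)"
    using assms by (intro card_Un_disjoint) auto
  show ?thesis using a b c by simp
qed

lemma even_symdiff:
  assumes "finite X" "finite Y"
  shows "even (card ((X - Y) \<union> (Y - X))) \<longleftrightarrow> even (card X + card Y)"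
proof -
  have "even (2 * card (X \<inter> Y))" by simp
  then show ?thesis using card_symdiff[OF assms] by (metis dvd_add_left_iff)
qed

lemma card_pairs_left:
  assumes "finite P" "E \<subseteq> P \<times> UNIV" "finite E"
  shows "card E = (\<Sum>l\<in>P. card {r. (l,r) \<in> E})"
proof -
  have "E = Sigma P (\<lambda>l. {r. (l,r) \<in> E})" using assms(2) by auto
  moreover have "\<forall>l\<in>P. finite {r. (l,r) \<in> E}" using lfib_finite[OF assms(3)] by auto
  ultimately show ?thesis using card_SigmaI[OF assms(1)] by metis
qed

lemma card_pairs_right:
  assumes "finite Q" "E \<subseteq> UNIV \<times> Q" "finite E"
  shows "card E = (\<Sum>r\<in>Q. card (fib E r))"
proof -
  have "prod.swap ` E = Sigma Q (\<lambda>r. fib E r)" using assms(2) unfolding fib_def by force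
  moreover have "\<forall>r\<in>Q. finite (fib E r)" using fib_finite[OF assms(3)] by auto
  moreover have "card (prod.swap ` E) = card E" by (simp add: card_image)
  ultimately show ?thesis using card_SigmaI[OF assms(1)] by metis
qed

lemma parity_reach:
  assumes finS: "finite S" and SP: "S \<subseteq> P \<times> Q" and fP: "finite P" and fQ: "finite Q"
    and oc: "odd (card {r. (c,r) \<in> S})"
    and el: "\<And>l. l \<noteq> c \<Longrightarrow> even (card {r. (l,r) \<in> S})"
    and er: "\<And>r. r \<noteq> i \<Longrightarrow> even (card (fib S r))"
  shows "(Inl c, Inr i) \<in> {(a,b). badj S a b}\<^sup>*"
proof (rule ccontr)
  assume nreach: "\<not> ?thesis"
  let ?Rel = "{(a,b). badj S a b}"
  define K where "K = {y. (Inl c, y) \<in> ?Rel\<^sup>*}"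
  have clos: "\<And>l r. (l,r) \<in> S \<Longrightarrow> Inl l \<in> K \<longleftrightarrow> Inr r \<in> K"
  proof -
    fix l r assume lr: "(l,r) \<in> S"
    have "(Inl l, Inr r) \<in> ?Rel" "(Inr r, Inl l) \<in> ?Rel" using lr by auto
    then show "Inl l \<in> K \<longleftrightarrow> Inr r \<in> K" unfolding K_def
      using rtrancl_into_rtrancl[of "Inl c" "Inl l" ?Rel "Inr r"]
        rtrancl_into_rtrancl[of "Inl c" "Inr r" ?Rel "Inl l"] by blast
  qed
  define E where "E = {(l,r) \<in> S. Inl l \<in> K}"
  define PL where "PL = {l \<in> P. Inl l \<in> K}"
  define QR where "QR = {r \<in> Q. Inr r \<in> K}"
  have "E \<subseteq> S" unfolding E_def by auto
  then have finE: "finite E" using finS finite_subset by blast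
  have fPL: "finite PL" unfolding PL_def using fP by simp
  have fQR: "finite QR" unfolding QR_def using fQ by simp
  have E1: "card E = (\<Sum>l\<in>PL. card {r. (l,r) \<in> E})"
    by (rule card_pairs_left[OF fPL _ finE]) (use SP in \<open>auto simp: E_def PL_def\<close>)
  have EQR: "E \<subseteq> UNIV \<times> QR"
  proof
    fix x assume "x \<in> E"
    then obtain l r where x: "x = (l,r)" "(l,r) \<in> S" "Inl l \<in> K" unfolding E_def by auto
    have "Inr r \<in> K" using clos[OF x(2)] x(3) by simp
    moreover have "r \<in> Q" using SP x(2) by auto
    ultimately show "x \<in> UNIV \<times> QR" unfolding QR_def using x(1) by simp
  qed
  have E2: "card E = (\<Sum>r\<in>QR. card (fib E r))"
    by (rule card_pairs_right[OF fQR EQR finE])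
  have fibL: "\<And>l. l \<in> PL \<Longrightarrow> {r. (l,r) \<in> E} = {r. (l,r) \<in> S}" unfolding E_def PL_def by auto
  have fibR: "fib E r = fib S r" if r: "r \<in> QR" for r
  proof -
    have rK: "Inr r \<in> K" using r unfolding QR_def by simp
    have "Inl l \<in> K" if "(l,r) \<in> S" for l using clos[OF that] rK by simp
    then show ?thesis unfolding fib_def E_def by auto
  qed
  have iQR: "i \<notin> QR" using nreach unfolding QR_def K_def by auto
  have evR: "even (card E)" unfolding E2
  proof (intro dvd_sum)
    fix a assume a: "a \<in> QR"
    then have "a \<noteq> i" using iQR by auto
    then show "2 dvd card (fib E a)" using fibR[OF a] er by simp
  qed
  have cne: "{r. (c,r) \<in> S} \<noteq> {}"
  proof
    assume "{r. (c,r) \<in> S} = {}" then show False using oc by simp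
  qed
  then have cP: "c \<in> P" using SP by auto
  have cPL: "c \<in> PL" unfolding PL_def K_def using cP by simp
  have "card E = card {r. (c,r) \<in> S} + (\<Sum>l\<in>PL - {c}. card {r. (l,r) \<in> E})"
  proof -
    have "card E = card {r. (c,r) \<in> E} + (\<Sum>l\<in>PL - {c}. card {r. (l,r) \<in> E})"
      unfolding E1 by (rule sum.remove[OF fPL cPL])
    then show ?thesis using fibL[OF cPL] by simp
  qed
  moreover have "even (\<Sum>l\<in>PL - {c}. card {r. (l,r) \<in> E})"
    using fibL el by (intro dvd_sum) auto
  ultimately have "odd (card E)" using oc by simp
  then show False using evR by simp
qed

lemma W_lemma:
  fixes Nf :: "'a \<Rightarrow> 'a set"
  assumes finP: "finite P" and neP: "P \<noteq> {}"
    and Nc: "\<And>c. c \<in> P \<Longrightarrow> Nf c \<subseteq> P \<and> c \<notin> Nf c \<and> card (Nf c) = Suc s"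
    and s1: "1 \<le> s"
    and int: "\<And>a c. a \<in> P \<Longrightarrow> c \<in> P \<Longrightarrow> a \<noteq> c \<Longrightarrow> s \<le> card (Nf a \<inter> Nf c)"
  shows "\<exists>W. W \<subseteq> P \<and> card W = Suc (Suc s) \<and> (\<forall>c\<in>P. Nf c \<subseteq> W)"
proof -
  have finN: "finite (Nf c)" if c: "c \<in> P" for c
  proof -
    have "Nf c \<subseteq> P" using Nc[OF c] by simp
    then show ?thesis using finite_subset finP by blast
  qed
  have cardN: "card (Nf c) = Suc s" if "c \<in> P" for c using Nc[OF that] by simp
  have "\<exists>a\<in>P. \<exists>c\<in>P. Nf a \<noteq> Nf c"
  proof (rule ccontr)
    assume "\<not> ?thesis"
    then have eq: "\<And>a c. a \<in> P \<Longrightarrow> c \<in> P \<Longrightarrow> Nf a = Nf c" by blast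
    obtain c0 where c0: "c0 \<in> P" using neP by auto
    have "Nf c0 \<noteq> {}" using cardN[OF c0] by auto
    then obtain b where b: "b \<in> Nf c0" by auto
    then have bP: "b \<in> P" using Nc[OF c0] by auto
    then have "b \<in> Nf b" using eq[OF bP c0] b by simp
    then show False using Nc[OF bP] by simp
  qed
  then obtain a c where a: "a \<in> P" and c: "c \<in> P" and ac: "Nf a \<noteq> Nf c" by blast
  then have anc: "a \<noteq> c" by auto
  define K where "K = Nf a \<inter> Nf c"
  define W where "W = Nf a \<union> Nf c"
  have fa: "finite (Nf a)" and fc: "finite (Nf c)" using finN a c by auto
  have finK: "finite K" unfolding K_def using fa by simp
  have Kge: "s \<le> card K" unfolding K_def using int[OF a c anc] .
  have Kle: "card K \<le> s"
  proof (rule ccontr)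
    assume "\<not> card K \<le> s"
    then have ge: "Suc s \<le> card K" by simp
    have Ka: "K \<subseteq> Nf a" and Kc: "K \<subseteq> Nf c" unfolding K_def by auto
    have "card K \<le> card (Nf a)" using card_mono[OF fa Ka] .
    then have "card K = card (Nf a)" using ge cardN[OF a] by simp
    then have "K = Nf a" using card_subset_eq[OF fa Ka] by simp
    moreover have "card K \<le> card (Nf c)" using card_mono[OF fc Kc] .
    then have "card K = card (Nf c)" using ge cardN[OF c] by simp
    then have "K = Nf c" using card_subset_eq[OF fc Kc] by simp
    ultimately show False using ac by simp
  qed
  have cK: "card K = s" using Kge Kle by simp
  have cW: "card W = Suc (Suc s)"
  proof -
    have "card (Nf a) + card (Nf c) = card W + card K"
      unfolding W_def K_def by (rule card_Un_Int[OF fa fc])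
    then show ?thesis using cardN[OF a] cardN[OF c] cK by simp
  qed
  have WP: "W \<subseteq> P" unfolding W_def using Nc[OF a] Nc[OF c] by auto
  have eqsub: "A = B" if "A \<subseteq> B" "finite B" "card B \<le> card A" for A B :: "'a set"
  proof -
    have "card A \<le> card B" using card_mono[OF that(2,1)] .
    then have "card A = card B" using that(3) by simp
    then show ?thesis using card_subset_eq[OF that(2,1)] by simp
  qed
  have claim1: "Nf x \<inter> W = K" if x: "x \<in> P" and nW: "\<not> Nf x \<subseteq> W" for x
  proof -
    have fx: "finite (Nf x)" using finN x by simp
    have xa: "x \<noteq> a" using nW unfolding W_def by auto
    have xc: "x \<noteq> c" using nW unfolding W_def by auto
    have fxW: "finite (Nf x \<inter> W)" using fx by simp
    have "Nf x \<inter> W \<subset> Nf x" using nW by auto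
    then have "card (Nf x \<inter> W) < card (Nf x)" using psubset_card_mono[OF fx] by simp
    then have le: "card (Nf x \<inter> W) \<le> s" using cardN[OF x] by simp
    have sa: "Nf x \<inter> Nf a \<subseteq> Nf x \<inter> W" unfolding W_def by auto
    have "s \<le> card (Nf x \<inter> Nf a)" using int[OF x a xa] .
    then have eqa: "Nf x \<inter> Nf a = Nf x \<inter> W" using eqsub[OF sa fxW] le by simp
    have sc: "Nf x \<inter> Nf c \<subseteq> Nf x \<inter> W" unfolding W_def by auto
    have "s \<le> card (Nf x \<inter> Nf c)" using int[OF x c xc] .
    then have eqc: "Nf x \<inter> Nf c = Nf x \<inter> W" using eqsub[OF sc fxW] le by simp
    have sub: "Nf x \<inter> W \<subseteq> K" using eqa eqc unfolding K_def by blast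
    have "s \<le> card (Nf x \<inter> W)" using int[OF x a xa] eqa by simp
    then show "Nf x \<inter> W = K" using eqsub[OF sub finK] cK by simp
  qed
  have allW: "\<forall>x\<in>P. Nf x \<subseteq> W"
  proof (rule ccontr)
    assume "\<not> ?thesis"
    then obtain x where x: "x \<in> P" "\<not> Nf x \<subseteq> W" by auto
    have xK: "Nf x \<inter> W = K" using claim1[OF x] .
    have allK: "K \<subseteq> Nf y" if y: "y \<in> P" for y
    proof (cases "Nf y \<subseteq> W")
      case False then show ?thesis using claim1[OF y] by auto
    next
      case True
      then have yx: "y \<noteq> x" using x by auto
      have sub: "Nf y \<inter> Nf x \<subseteq> K" using True xK by auto
      have "s \<le> card (Nf y \<inter> Nf x)" using int[OF y x(1) yx] .
      then have "Nf y \<inter> Nf x = K" using eqsub[OF sub finK] cK by simp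
      then show ?thesis by auto
    qed
    have "K \<noteq> {}" using cK s1 by auto
    then obtain b where b: "b \<in> K" by auto
    then have bP: "b \<in> P" unfolding K_def using Nc[OF a] by auto
    then show False using allK[OF bP] b Nc[OF bP] by auto
  qed
  show ?thesis using WP cW allW by blast
qed

lemma tope_sub: "is_tope n d v \<sigma> G \<Longrightarrow> G \<subseteq> {0..<n} \<times> {0..<d}"
  by (simp add: is_tope_def)

lemma tope_fin: "is_tope n d v \<sigma> G \<Longrightarrow> finite G"
proof -
  assume "is_tope n d v \<sigma> G"
  then have "G \<subseteq> {0..<n} \<times> {0..<d}" by (rule tope_sub)
  moreover have "finite ({0..<n} \<times> {0..<d})" by simp
  ultimately show ?thesis using finite_subset by blast
qed

lemma tope_fib: "is_tope n d v \<sigma> G \<Longrightarrow> r < d \<Longrightarrow> card (fib G r) = v r"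
  by (simp add: is_tope_def rdeg_def fib_def)

lemma tope_fib_out: "is_tope n d v \<sigma> G \<Longrightarrow> \<not> r < d \<Longrightarrow> fib G r = {}"
  using tope_sub unfolding fib_def by fastforce

lemma tope_lfun:
  assumes T: "is_tope n d v \<sigma> G" and sn: "\<sigma> \<subseteq> {0..<n}"
  shows "lfun G \<sigma>"
proof -
  have sub: "G \<subseteq> {0..<n} \<times> {0..<d}" using T by (rule tope_sub)
  have ld: "\<And>l. l < n \<Longrightarrow> card {r. (l,r) \<in> G} = (if l \<in> \<sigma> then 1 else 0)"
    using T unfolding is_tope_def ldeg_def by auto
  have fG: "finite G" using T by (rule tope_fin)
  have A: "\<And>l r. (l,r) \<in> G \<Longrightarrow> l \<in> \<sigma>"
  proof (rule ccontr)
    fix l r assume lr: "(l,r) \<in> G" and nl: "l \<notin> \<sigma>"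
    have "l < n" using sub lr by auto
    then have "card {r. (l,r) \<in> G} = 0" using ld nl by simp
    then have "{r. (l,r) \<in> G} = {}" using lfib_finite[OF fG] by simp
    then show False using lr by auto
  qed
  have B: "\<exists>!r. (l,r) \<in> G" if l: "l \<in> \<sigma>" for l
  proof -
    have "l < n" using l sn by auto
    then have "card {r. (l,r) \<in> G} = 1" using ld l by simp
    then obtain r0 where eq: "{r. (l,r) \<in> G} = {r0}" by (metis card_1_singletonE)
    have "(l,r0) \<in> G" using eq by (metis mem_Collect_eq singletonI)
    moreover have "\<And>r. (l,r) \<in> G \<Longrightarrow> r = r0" using eq by (metis mem_Collect_eq singletonD)
    ultimately show ?thesis by blast
  qed
  show ?thesis unfolding lfun_def using A B by blast
qed

lemma tope_intro:
  assumes sub: "G \<subseteq> {0..<n} \<times> {0..<d}" and sn: "\<sigma> \<subseteq> {0..<n}" and lf: "lfun G \<sigma>"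
    and rd: "\<And>r. r < d \<Longrightarrow> card (fib G r) = v r"
  shows "is_tope n d v \<sigma> G"
proof -
  have "ldeg G l = (if l \<in> \<sigma> then 1 else 0)" for l
  proof (cases "l \<in> \<sigma>")
    case True
    then obtain r0 where r0: "(l,r0) \<in> G" and u: "\<And>r. (l,r) \<in> G \<Longrightarrow> r = r0" using lf unfolding lfun_def by blast
    have "{r. (l,r) \<in> G} = {r0}"
    proof (rule set_eqI)
      fix r show "r \<in> {r. (l,r) \<in> G} \<longleftrightarrow> r \<in> {r0}" using r0 u by blast
    qed
    then show ?thesis using True unfolding ldeg_def by simp
  next
    case False
    then have "{r. (l,r) \<in> G} = {}" using lf unfolding lfun_def by auto
    then show ?thesis using False unfolding ldeg_def by simp
  qed
  moreover have "\<forall>r<d. rdeg G r = v r" using rd unfolding rdeg_def fib_def by blast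
  ultimately show ?thesis unfolding is_tope_def using sub by blast
qed

lemma tope_insert:
  assumes T: "is_tope n d v \<sigma> G" and sn: "\<sigma> \<subseteq> {0..<n}" and e: "e \<notin> \<sigma>" "e < n" and j: "j < d"
  shows "is_tope n d (v(j := v j + 1)) (insert e \<sigma>) (insert (e,j) G)"
proof (rule tope_intro)
  show "insert (e,j) G \<subseteq> {0..<n} \<times> {0..<d}" using tope_sub[OF T] e j by auto
  show "insert e \<sigma> \<subseteq> {0..<n}" using sn e by auto
  have lf: "lfun G \<sigma>" using tope_lfun[OF T sn] .
  show "lfun (insert (e,j) G) (insert e \<sigma>)"
    unfolding lfun_def
  proof (intro conjI allI impI ballI)
    fix l r assume "(l,r) \<in> insert (e,j) G"
    then show "l \<in> insert e \<sigma>" using lf unfolding lfun_def by auto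
  next
    fix l assume l: "l \<in> insert e \<sigma>"
    show "\<exists>!r. (l,r) \<in> insert (e,j) G"
    proof (cases "l = e")
      case True
      have "\<And>r. (e,r) \<notin> G" using lf e unfolding lfun_def by auto
      then show ?thesis using True by auto
    next
      case False
      then have "l \<in> \<sigma>" using l by auto
      then have "\<exists>!r. (l,r) \<in> G" using lf unfolding lfun_def by auto
      then show ?thesis using False by auto
    qed
  qed
  fix r assume r: "r < d"
  have eG: "e \<notin> fib G r" using lf e unfolding lfun_def fib_def by auto
  have fG: "finite (fib G r)" using fib_finite[OF tope_fin[OF T]] .
  show "card (fib (insert (e,j) G) r) = (v(j := v j + 1)) r"
  proof (cases "r = j")
    case True
    then have "fib (insert (e,j) G) r = insert e (fib G r)" unfolding fib_def by auto
    then show ?thesis using True eG fG tope_fib[OF T r] by simp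
  next
    case False
    then have "fib (insert (e,j) G) r = fib G r" unfolding fib_def by auto
    then show ?thesis using False tope_fib[OF T r] by simp
  qed
qed

lemma tree_acyc: "is_tree_on V T \<Longrightarrow> \<not> has_cycle (badj T) V"
  unfolding is_tree_on_def has_cycle_def by blast

lemma tree_edges: "is_tree_on V T \<Longrightarrow> \<forall>(l,r)\<in>T. Inl l \<in> V \<and> Inr r \<in> V"
  unfolding is_tree_on_def by blast

lemma tope_unique_tree:
  assumes tr: "is_tree_on V T" and fV: "finite V" and XT: "X \<subseteq> T" and YT: "Y \<subseteq> T"
    and tX: "is_tope n d u \<sigma> X" and tY: "is_tope n d u \<sigma> Y" and sn: "\<sigma> \<subseteq> {0..<n}"
  shows "X = Y"
proof (rule unique_sub[OF fV tree_edges[OF tr] tree_acyc[OF tr] XT YT])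
  show "lfun X \<sigma>" using tope_lfun[OF tX sn] .
  show "lfun Y \<sigma>" using tope_lfun[OF tY sn] .
  show "finite X" using tope_fin[OF tX] .
  show "finite Y" using tope_fin[OF tY] .
  fix r show "card (fib X r) = card (fib Y r)"
  proof (cases "r < d")
    case True then show ?thesis using tope_fib[OF tX] tope_fib[OF tY] by simp
  next
    case False then show ?thesis using tope_fib_out[OF tX] tope_fib_out[OF tY] by simp
  qed
qed

lemma minus_one_subsets:
  assumes "finite \<tau>" "card \<tau> = Suc m"
  shows "(\<sigma> \<subset> \<tau> \<and> card \<sigma> = m) \<longleftrightarrow> (\<exists>a\<in>\<tau>. \<sigma> = \<tau> - {a})"
proof
  assume A: "\<sigma> \<subset> \<tau> \<and> card \<sigma> = m"
  then obtain a where a: "a \<in> \<tau>" "a \<notin> \<sigma>" by auto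
  then have sub: "\<sigma> \<subseteq> \<tau> - {a}" using A by auto
  have "card (\<tau> - {a}) = m" using assms a by simp
  then have "\<sigma> = \<tau> - {a}" using card_subset_eq[OF _ sub] assms A by simp
  then show "\<exists>a\<in>\<tau>. \<sigma> = \<tau> - {a}" using a by blast
next
  assume "\<exists>a\<in>\<tau>. \<sigma> = \<tau> - {a}"
  then obtain a where a: "a \<in> \<tau>" "\<sigma> = \<tau> - {a}" by blast
  then show "\<sigma> \<subset> \<tau> \<and> card \<sigma> = m" using assms by auto
qed

lemma union_minus_one:
  assumes "finite \<tau>" "card \<tau> = Suc m"
  shows "\<Union>{F \<sigma> |\<sigma>. \<sigma> \<subset> \<tau> \<and> card \<sigma> = m} = (\<Union>a\<in>\<tau>. F (\<tau> - {a}))"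
proof (rule set_eqI)
  fix x
  show "x \<in> \<Union>{F \<sigma> |\<sigma>. \<sigma> \<subset> \<tau> \<and> card \<sigma> = m} \<longleftrightarrow> x \<in> (\<Union>a\<in>\<tau>. F (\<tau> - {a}))"
  proof
    assume "x \<in> \<Union>{F \<sigma> |\<sigma>. \<sigma> \<subset> \<tau> \<and> card \<sigma> = m}"
    then obtain X where X: "X \<in> {F \<sigma> |\<sigma>. \<sigma> \<subset> \<tau> \<and> card \<sigma> = m}" "x \<in> X" by (rule UnionE)
    from X(1) obtain \<sigma> where s: "X = F \<sigma>" "\<sigma> \<subset> \<tau> \<and> card \<sigma> = m" by (auto simp only: mem_Collect_eq)
    obtain a where a: "a \<in> \<tau>" "\<sigma> = \<tau> - {a}" using s(2) minus_one_subsets[OF assms] by (auto simp only:)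
    show "x \<in> (\<Union>a\<in>\<tau>. F (\<tau> - {a}))" using a s(1) X(2) by (intro UN_I[of a]) simp_all
  next
    assume "x \<in> (\<Union>a\<in>\<tau>. F (\<tau> - {a}))"
    then obtain a where a: "a \<in> \<tau>" "x \<in> F (\<tau> - {a})" by (rule UN_E)
    have "\<tau> - {a} \<subset> \<tau> \<and> card (\<tau> - {a}) = m" using minus_one_subsets[OF assms, of "\<tau> - {a}"] a(1) by (auto simp only:)
    then have "F (\<tau> - {a}) \<in> {F \<sigma> |\<sigma>. \<sigma> \<subset> \<tau> \<and> card \<sigma> = m}" by (auto simp only: mem_Collect_eq)
    then show "x \<in> \<Union>{F \<sigma> |\<sigma>. \<sigma> \<subset> \<tau> \<and> card \<sigma> = m}" using a(2) by (rule UnionI)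
  qed
qed

locale LTF =
  fixes n d :: nat and v :: "nat \<Rightarrow> nat" and M :: "nat set \<Rightarrow> (nat \<times> nat) set" and i :: nat
  assumes lin: "linkage_tope_field n d v M" and kn: "thickness d v < n" and iid: "i < d"
begin

abbreviation "kk \<equiv> thickness d v"
abbreviation "ww \<equiv> v(i := v i + 1)"
definition "C \<tau> = linkage_covector n d v M \<tau>"
definition "Am = amalgamation n d v M i"

lemma vpos: "j < d \<Longrightarrow> 0 < v j"
  using lin unfolding linkage_tope_field_def tope_field_def valid_type_def by auto

lemma topeM: "\<sigma> \<subseteq> {0..<n} \<Longrightarrow> card \<sigma> = kk \<Longrightarrow> is_tope n d v \<sigma> (M \<sigma>)"
  using lin unfolding linkage_tope_field_def tope_field_def by auto

lemma treeC: "\<tau> \<subseteq> {0..<n} \<Longrightarrow> card \<tau> = kk + 1 \<Longrightarrow> is_tree_on (Inl ` \<tau> \<union> Inr ` {0..<d}) (C \<tau>)"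
  using lin unfolding linkage_tope_field_def C_def by auto

lemma kpos: "1 \<le> kk"
proof -
  have "v i \<le> (\<Sum>j<d. v j)" using iid by (intro member_le_sum) auto
  then show ?thesis using vpos[OF iid] unfolding thickness_def by simp
qed

lemma sum_ww: "(\<Sum>j<d. ww j) = kk + 1"
proof -
  have "(\<Sum>j<d. ww j) = (\<Sum>j<d. v j + (if j = i then 1 else 0))"
    by (intro sum.cong) auto
  also have "\<dots> = (\<Sum>j<d. v j) + (\<Sum>j<d. (if j = i then 1 else 0))"
    by (rule sum.distrib)
  also have "(\<Sum>j<d. (if j = i then (1::nat) else 0)) = 1" using iid by (simp add: sum.delta)
  finally show ?thesis unfolding thickness_def by simp
qed

lemma thick_ww: "thickness d ww = kk + 1"
  unfolding thickness_def[of d ww] using sum_ww by simp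

lemma C_eq: "finite \<tau> \<Longrightarrow> card \<tau> = Suc kk \<Longrightarrow> C \<tau> = (\<Union>a\<in>\<tau>. M (\<tau> - {a}))"
  unfolding C_def linkage_covector_def by (rule union_minus_one)

lemma finV: "finite \<tau> \<Longrightarrow> finite (Inl ` \<tau> \<union> Inr ` {0..<d})" by simp

lemma sub_fin: "\<tau> \<subseteq> {0..<n} \<Longrightarrow> finite \<tau>" using finite_subset by blast

lemma am_ex:
  assumes tn: "\<tau> \<subseteq> {0..<n}" and tc: "card \<tau> = kk + 1"
  shows "\<exists>G. G \<subseteq> C \<tau> \<and> is_tope n d ww \<tau> G"
proof -
  have fin: "finite \<tau>" using sub_fin[OF tn] .
  have "\<tau> \<noteq> {}" using tc by auto
  then obtain a where a: "a \<in> \<tau>" by auto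
  have an: "\<tau> - {a} \<subseteq> {0..<n}" using tn by auto
  have ac: "card (\<tau> - {a}) = kk" using tc a fin by simp
  have ta: "is_tope n d v (\<tau> - {a}) (M (\<tau> - {a}))" using topeM[OF an ac] .
  have "card (fib (M (\<tau> - {a})) i) = v i" using tope_fib[OF ta iid] .
  then have "fib (M (\<tau> - {a})) i \<noteq> {}" using vpos[OF iid] by auto
  then obtain e where e: "(e,i) \<in> M (\<tau> - {a})" unfolding fib_def by auto
  have eta: "e \<in> \<tau> - {a}" using e tope_lfun[OF ta an] unfolding lfun_def by auto
  then have et: "e \<in> \<tau>" by simp
  have en: "\<tau> - {e} \<subseteq> {0..<n}" using tn by auto
  have ec: "card (\<tau> - {e}) = kk" using tc et fin by simp
  have te: "is_tope n d v (\<tau> - {e}) (M (\<tau> - {e}))" using topeM[OF en ec] .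
  have "is_tope n d ww (insert e (\<tau> - {e})) (insert (e,i) (M (\<tau> - {e})))"
    by (rule tope_insert[OF te en]) (use et tn iid in auto)
  moreover have "insert e (\<tau> - {e}) = \<tau>" using et by auto
  moreover have "insert (e,i) (M (\<tau> - {e})) \<subseteq> C \<tau>"
    using C_eq[OF fin] tc e a et by auto
  ultimately have "insert (e,i) (M (\<tau> - {e})) \<subseteq> C \<tau> \<and> is_tope n d ww \<tau> (insert (e,i) (M (\<tau> - {e})))"
    by simp
  then show ?thesis by blast
qed

lemma am_uniq:
  assumes tn: "\<tau> \<subseteq> {0..<n}" and tc: "card \<tau> = kk + 1"
    and "X \<subseteq> C \<tau>" "Y \<subseteq> C \<tau>" "is_tope n d u \<tau> X" "is_tope n d u \<tau> Y"
  shows "X = Y"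
  by (rule tope_unique_tree[OF treeC[OF tn tc] finV[OF sub_fin[OF tn]]]) (use assms in auto)

lemma am_prop:
  assumes tn: "\<tau> \<subseteq> {0..<n}" and tc: "card \<tau> = kk + 1"
  shows "Am \<tau> \<subseteq> C \<tau> \<and> is_tope n d ww \<tau> (Am \<tau>)"
proof -
  have "\<exists>!G. G \<subseteq> C \<tau> \<and> is_tope n d ww \<tau> G"
    using am_ex[OF tn tc] am_uniq[OF tn tc] by blast
  then show ?thesis unfolding Am_def amalgamation_def C_def[symmetric] by (rule theI')
qed

end

lemma lfun_card1: "lfun X S \<Longrightarrow> card {r. (l,r) \<in> X} = (if l \<in> S then 1 else 0)"
proof -
  assume lf: "lfun X S"
  show ?thesis
  proof (cases "l \<in> S")
    case True
    then obtain r0 where r0: "(l,r0) \<in> X" and u: "\<And>r. (l,r) \<in> X \<Longrightarrow> r = r0"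
      using lf unfolding lfun_def by blast
    have "{r. (l,r) \<in> X} = {r0}"
    proof (rule set_eqI)
      fix r show "r \<in> {r. (l,r) \<in> X} \<longleftrightarrow> r \<in> {r0}" using r0 u by blast
    qed
    then show ?thesis using True by simp
  next
    case False
    then have "{r. (l,r) \<in> X} = {}" using lf unfolding lfun_def by blast
    then show ?thesis using False by simp
  qed
qed

lemma lfun_card: assumes "finite X" "lfun X S" shows "card X = card S"
proof -
  have img: "fst ` X = S"
  proof
    show "fst ` X \<subseteq> S" using assms(2) unfolding lfun_def by auto
    show "S \<subseteq> fst ` X"
    proof
      fix l assume "l \<in> S"
      then obtain r where "(l,r) \<in> X" using assms(2) unfolding lfun_def by blast
      then show "l \<in> fst ` X" by force
    qed
  qed
  have "inj_on fst X"
  proof (rule inj_onI)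
    fix x y assume x: "x \<in> X" and y: "y \<in> X" and e: "fst x = fst y"
    obtain l r where xx: "x = (l,r)" by (cases x)
    obtain l' r' where yy: "y = (l',r')" by (cases y)
    have "l = l'" using e xx yy by simp
    have "l \<in> S" using x xx assms(2) unfolding lfun_def by auto
    then have "\<exists>!r. (l,r) \<in> X" using assms(2) unfolding lfun_def by blast
    then have "r = r'" using x y xx yy \<open>l = l'\<close> by blast
    then show "x = y" using xx yy \<open>l = l'\<close> by simp
  qed
  then show ?thesis using img card_image by fastforce
qed

locale LTF2 = LTF +
  fixes \<rho> :: "nat set"
  assumes rsub: "\<rho> \<subseteq> {0..<n}" and rcard: "card \<rho> = kk + 2"
begin

lemma finr: "finite \<rho>" using sub_fin[OF rsub] .

definition "T c = C (\<rho> - {c})"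
definition "G c = Am (\<rho> - {c})"
definition "f a c = M (\<rho> - {a, c})"
definition "N c = fib (G c) i"
definition "VV = Inl ` \<rho> \<union> Inr ` {0..<d}"

lemma sub1: "c \<in> \<rho> \<Longrightarrow> \<rho> - {c} \<subseteq> {0..<n} \<and> card (\<rho> - {c}) = kk + 1"
  using rsub rcard finr by auto

lemma sub2: "a \<in> \<rho> \<Longrightarrow> c \<in> \<rho> \<Longrightarrow> a \<noteq> c \<Longrightarrow> \<rho> - {a, c} \<subseteq> {0..<n} \<and> card (\<rho> - {a, c}) = kk"
proof -
  assume a: "a \<in> \<rho>" and c: "c \<in> \<rho>" and ac: "a \<noteq> c"
  have "\<rho> - {a, c} = (\<rho> - {c}) - {a}" by auto
  moreover have "card ((\<rho> - {c}) - {a}) = kk" using sub1[OF c] a ac finr by simp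
  ultimately show ?thesis using rsub by auto
qed

lemma treeT: "c \<in> \<rho> \<Longrightarrow> is_tree_on (Inl ` (\<rho> - {c}) \<union> Inr ` {0..<d}) (T c)"
  unfolding T_def using treeC sub1 by blast

lemma finVc: "finite (Inl ` (\<rho> - {c}) \<union> Inr ` {0..<d})" using finr by simp

lemma GT: "c \<in> \<rho> \<Longrightarrow> G c \<subseteq> T c"
  unfolding G_def T_def using am_prop sub1 by blast

lemma topeG: "c \<in> \<rho> \<Longrightarrow> is_tope n d ww (\<rho> - {c}) (G c)"
  unfolding G_def using am_prop sub1 by blast

lemma uniqT: "c \<in> \<rho> \<Longrightarrow> X \<subseteq> T c \<Longrightarrow> is_tope n d u (\<rho> - {c}) X \<Longrightarrow> Y \<subseteq> T c \<Longrightarrow> is_tope n d u (\<rho> - {c}) Y \<Longrightarrow> X = Y"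
  using tope_unique_tree[OF treeT finVc] sub1 by blast

lemma topef: assumes "a \<in> \<rho>" "c \<in> \<rho>" "a \<noteq> c" shows "is_tope n d v (\<rho> - {a, c}) (f a c)"
proof -
  have s: "\<rho> - {a, c} \<subseteq> {0..<n}" "card (\<rho> - {a, c}) = kk" using sub2[OF assms] by auto
  show ?thesis unfolding f_def by (rule topeM[OF s])
qed

lemma fsym: "f a c = f c a" unfolding f_def by (simp add: insert_commute)

lemma fT: assumes a: "a \<in> \<rho>" and c: "c \<in> \<rho>" and ac: "a \<noteq> c" shows "f a c \<subseteq> T c"
proof -
  have fc: "finite (\<rho> - {c})" using finr by simp
  have cc: "card (\<rho> - {c}) = Suc kk" using sub1[OF c] by simp
  have Teq: "T c = (\<Union>x\<in>\<rho> - {c}. M ((\<rho> - {c}) - {x}))"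
    unfolding T_def by (rule C_eq[OF fc cc])
  have ar: "a \<in> \<rho> - {c}" using a ac by simp
  have "M ((\<rho> - {c}) - {a}) \<subseteq> (\<Union>x\<in>\<rho> - {c}. M ((\<rho> - {c}) - {x}))"
    by (rule UN_upper[OF ar])
  moreover have "(\<rho> - {c}) - {a} = \<rho> - {a, c}" by auto
  ultimately show ?thesis unfolding f_def Teq by simp
qed

lemma T_edge: "c \<in> \<rho> \<Longrightarrow> (l,r) \<in> T c \<Longrightarrow> l \<in> \<rho> - {c} \<and> r < d"
  using tree_edges[OF treeT] by fastforce

lemma factA:
  assumes c: "c \<in> \<rho>" and e: "(e,i) \<in> T c"
  shows "G c = insert (e,i) (f c e)"
proof -
  have er: "e \<in> \<rho>" and ec: "e \<noteq> c" using T_edge[OF c e] by auto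
  have s2: "\<rho> - {c, e} \<subseteq> {0..<n}" using sub2[OF c er] ec by auto
  have tf: "is_tope n d v (\<rho> - {c, e}) (f c e)" using topef[OF c er] ec by auto
  have "is_tope n d ww (insert e (\<rho> - {c, e})) (insert (e,i) (f c e))"
    by (rule tope_insert[OF tf s2]) (use er rsub iid in auto)
  moreover have "insert e (\<rho> - {c, e}) = \<rho> - {c}" using er ec by auto
  ultimately have t1: "is_tope n d ww (\<rho> - {c}) (insert (e,i) (f c e))" by simp
  have "f c e \<subseteq> T c" using fT[OF er c] ec fsym by auto
  then have s1: "insert (e,i) (f c e) \<subseteq> T c" using e by auto
  show ?thesis using uniqT[OF c GT[OF c] topeG[OF c] s1 t1] .
qed

lemma N_T: "c \<in> \<rho> \<Longrightarrow> N c = {l. (l,i) \<in> T c}"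
proof -
  assume c: "c \<in> \<rho>"
  show ?thesis
  proof
    show "N c \<subseteq> {l. (l,i) \<in> T c}" unfolding N_def fib_def using GT[OF c] by auto
    show "{l. (l,i) \<in> T c} \<subseteq> N c"
    proof
      fix l assume "l \<in> {l. (l,i) \<in> T c}"
      then have "(l,i) \<in> T c" by simp
      then have "G c = insert (l,i) (f c l)" using factA[OF c] by simp
      then show "l \<in> N c" unfolding N_def fib_def by auto
    qed
  qed
qed

lemma N_props: "c \<in> \<rho> \<Longrightarrow> N c \<subseteq> \<rho> \<and> c \<notin> N c \<and> card (N c) = Suc (v i)"
proof -
  assume c: "c \<in> \<rho>"
  have lf: "lfun (G c) (\<rho> - {c})" using tope_lfun[OF topeG[OF c]] sub1[OF c] by blast
  have "N c \<subseteq> \<rho> - {c}" unfolding N_def fib_def using lf unfolding lfun_def by auto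
  moreover have "card (N c) = Suc (v i)" unfolding N_def using tope_fib[OF topeG[OF c] iid] by simp
  ultimately show ?thesis by auto
qed

lemma fibf_N:
  assumes a: "a \<in> \<rho>" and c: "c \<in> \<rho>" and ac: "a \<noteq> c"
  shows "fib (f a c) i \<subseteq> N a \<inter> N c" and "card (fib (f a c) i) = v i"
proof -
  show "card (fib (f a c) i) = v i" using tope_fib[OF topef[OF a c ac] iid] .
  have "f a c \<subseteq> T c" using fT[OF a c ac] .
  moreover have "f a c \<subseteq> T a" using fT[OF c a] ac fsym by auto
  ultimately show "fib (f a c) i \<subseteq> N a \<inter> N c" unfolding fib_def using N_T[OF a] N_T[OF c] by auto
qed

lemma N_int: "a \<in> \<rho> \<Longrightarrow> c \<in> \<rho> \<Longrightarrow> a \<noteq> c \<Longrightarrow> v i \<le> card (N a \<inter> N c)"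
proof -
  assume a: "a \<in> \<rho>" and c: "c \<in> \<rho>" and ac: "a \<noteq> c"
  have "finite (N a \<inter> N c)" using N_props[OF a] finr finite_subset by blast
  then show ?thesis using card_mono fibf_N[OF a c ac] by metis
qed

definition "W = (SOME W. W \<subseteq> \<rho> \<and> card W = Suc (Suc (v i)) \<and> (\<forall>c\<in>\<rho>. N c \<subseteq> W))"

lemma W_prop: "W \<subseteq> \<rho> \<and> card W = Suc (Suc (v i)) \<and> (\<forall>c\<in>\<rho>. N c \<subseteq> W)"
proof -
  have "\<exists>W. W \<subseteq> \<rho> \<and> card W = Suc (Suc (v i)) \<and> (\<forall>c\<in>\<rho>. N c \<subseteq> W)"
  proof (rule W_lemma[OF finr])
    show "\<rho> \<noteq> {}" using rcard by auto
    show "\<And>c. c \<in> \<rho> \<Longrightarrow> N c \<subseteq> \<rho> \<and> c \<notin> N c \<and> card (N c) = Suc (v i)" by (rule N_props)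
    show "1 \<le> v i" using vpos[OF iid] by simp
    show "\<And>a c. a \<in> \<rho> \<Longrightarrow> c \<in> \<rho> \<Longrightarrow> a \<noteq> c \<Longrightarrow> v i \<le> card (N a \<inter> N c)" by (rule N_int)
  qed
  then show ?thesis unfolding W_def by (rule someI_ex)
qed

lemma finW: "finite W" using W_prop finr finite_subset by blast

lemma NW: assumes e: "e \<in> W" shows "N e = W - {e}"
proof -
  have er: "e \<in> \<rho>" using e W_prop by auto
  have sub: "N e \<subseteq> W - {e}" using W_prop N_props[OF er] er by auto
  have "card (W - {e}) = Suc (v i)" using W_prop e finW by simp
  then have "card (W - {e}) \<le> card (N e)" using N_props[OF er] by simp
  then show ?thesis using card_subset_eq[OF _ sub] finW card_mono[OF _ sub] by (metis finite_Diff le_antisym)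
qed

end

context LTF2
begin

definition "e0 = (SOME e. e \<in> W)"
definition "HH = insert (e0, i) (G e0)"
definition "DD = (\<Union>c\<in>\<rho>. G c)"

lemma W_ne: "W \<noteq> {}" using W_prop by auto

lemma e0W: "e0 \<in> W" unfolding e0_def using W_ne by (simp add: some_in_eq)

lemma Wr: "e \<in> W \<Longrightarrow> e \<in> \<rho>" using W_prop by auto

lemma HH_eq: assumes e: "e \<in> W" shows "HH = insert (e,i) (G e)"
proof (cases "e = e0")
  case True then show ?thesis unfolding HH_def by simp
next
  case False
  have e0r: "e0 \<in> \<rho>" using Wr[OF e0W] .
  have er: "e \<in> \<rho>" using Wr[OF e] .
  have "e \<in> N e0" using NW[OF e0W] e False by simp
  then have "(e,i) \<in> T e0" using N_T[OF e0r] by simp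
  then have g0: "G e0 = insert (e,i) (f e0 e)" using factA[OF e0r] by simp
  have "e0 \<in> N e" using NW[OF e] e0W False by simp
  then have "(e0,i) \<in> T e" using N_T[OF er] by simp
  then have g1: "G e = insert (e0,i) (f e e0)" using factA[OF er] by simp
  show ?thesis unfolding HH_def g0 g1 using fsym[of e0 e] by (simp add: insert_commute)
qed

lemma topeHH: "is_tope n d (ww(i := ww i + 1)) \<rho> HH"
proof -
  have e0r: "e0 \<in> \<rho>" using Wr[OF e0W] .
  have s: "\<rho> - {e0} \<subseteq> {0..<n}" using sub1[OF e0r] by simp
  have "is_tope n d (ww(i := ww i + 1)) (insert e0 (\<rho> - {e0})) (insert (e0,i) (G e0))"
    by (rule tope_insert[OF topeG[OF e0r] s]) (use e0r rsub iid in auto)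
  moreover have "insert e0 (\<rho> - {e0}) = \<rho>" using e0r by auto
  ultimately show ?thesis unfolding HH_def by simp
qed

lemma lfunHH: "lfun HH \<rho>" using tope_lfun[OF topeHH rsub] .

lemma finHH: "finite HH" using tope_fin[OF topeHH] .

lemma fibHH: "j < d \<Longrightarrow> j \<noteq> i \<Longrightarrow> card (fib HH j) = v j"
  using tope_fib[OF topeHH] by simp

lemma fibHHi: "fib HH i = W"
proof -
  have "fib HH i = insert e0 (N e0)" unfolding HH_def N_def fib_def by auto
  then show ?thesis using NW[OF e0W] e0W by auto
qed

lemma finT: "c \<in> \<rho> \<Longrightarrow> finite (T c)"
proof -
  assume c: "c \<in> \<rho>"
  have "T c \<subseteq> \<rho> \<times> {0..<d}" using T_edge[OF c] by auto
  moreover have "finite (\<rho> \<times> {0..<d})" using finr by simp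
  ultimately show ?thesis using finite_subset by blast
qed

lemma D_sub: "DD \<subseteq> \<rho> \<times> {0..<d}"
proof
  fix x assume "x \<in> DD"
  then obtain c where c: "c \<in> \<rho>" and x: "x \<in> G c" unfolding DD_def by blast
  obtain l r where lr: "x = (l,r)" by (cases x)
  have "(l,r) \<in> T c" using GT[OF c] x lr by auto
  then show "x \<in> \<rho> \<times> {0..<d}" using T_edge[OF c] lr by auto
qed

lemma finDD: "finite DD"
  using D_sub finite_subset finr by (metis finite_SigmaI finite_atLeastLessThan)

lemma HH_DD: "HH \<subseteq> DD"
proof -
  have e0r: "e0 \<in> \<rho>" using Wr[OF e0W] .
  have "card W \<ge> 2" using W_prop by simp
  then obtain e1 where e1: "e1 \<in> W" "e1 \<noteq> e0"
    by (metis One_nat_def card_le_Suc0_iff_eq finW not_less_eq_eq numeral_2_eq_2)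
  have e1r: "e1 \<in> \<rho>" using Wr[OF e1(1)] .
  have "e0 \<in> N e1" using NW[OF e1(1)] e0W e1(2) by simp
  then have "(e0,i) \<in> G e1" unfolding N_def fib_def by simp
  then have "(e0,i) \<in> DD" unfolding DD_def using e1r by blast
  moreover have "G e0 \<subseteq> DD" unfolding DD_def using e0r by blast
  ultimately show ?thesis unfolding HH_def by simp
qed

lemma G_in_Te:
  assumes c: "c \<in> \<rho>" and e: "e \<in> N c"
  shows "G c \<subseteq> insert (e,i) (T e)"
proof -
  have ei: "(e,i) \<in> T c" using e N_T[OF c] by simp
  have er: "e \<in> \<rho>" and ec: "e \<noteq> c" using T_edge[OF c ei] by auto
  have "G c = insert (e,i) (f c e)" using factA[OF c ei] .
  moreover have "f c e \<subseteq> T e" using fT[OF c er] ec by simp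
  ultimately show ?thesis by auto
qed

lemma degT:
  assumes e: "e \<in> \<rho>" and j: "j < d"
  shows "card {l. (l,j) \<in> T e} \<le> v j + 1"
proof (rule ccontr)
  assume "\<not> ?thesis"
  then have big: "v j + 1 < card {l. (l,j) \<in> T e}" by simp
  let ?Nj = "{l. (l,j) \<in> T e}"
  have finNj: "finite ?Nj" using fib_finite[OF finT[OF e], of j] unfolding fib_def by simp
  have "?Nj \<noteq> {}"
  proof
    assume "?Nj = {}" then have "card ?Nj = 0" by (simp only: card.empty)
    then show False using big by simp
  qed
  then obtain a where a: "(a,j) \<in> T e" by auto
  have ar: "a \<in> \<rho>" and ae: "a \<noteq> e" using T_edge[OF e a] by auto
  have tfa: "is_tope n d v (\<rho> - {a, e}) (f a e)" using topef[OF ar e ae] .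
  have fae: "f a e \<subseteq> T e" using fT[OF ar e ae] .
  have lfa: "lfun (f a e) (\<rho> - {a, e})" using tope_lfun[OF tfa] sub2[OF ar e ae] by blast
  have sub: "fib (f a e) j \<subseteq> ?Nj - {a}"
  proof
    fix l assume "l \<in> fib (f a e) j"
    then have lj: "(l,j) \<in> f a e" by (simp add: fib_def)
    then have "l \<in> \<rho> - {a, e}" using lfa unfolding lfun_def by blast
    then show "l \<in> ?Nj - {a}" using lj fae by auto
  qed
  have cf: "card (fib (f a e) j) = v j" using tope_fib[OF tfa j] .
  have "card (?Nj - {a}) = card ?Nj - 1" using a finNj by simp
  then have "card (fib (f a e) j) < card (?Nj - {a})" using cf big by simp
  then have "\<not> (?Nj - {a} \<subseteq> fib (f a e) j)"
  proof -
    assume lt: "card (fib (f a e) j) < card (?Nj - {a})"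
    show ?thesis
    proof
      assume "?Nj - {a} \<subseteq> fib (f a e) j"
      then have "card (?Nj - {a}) \<le> card (fib (f a e) j)" by (rule card_mono[OF fib_finite[OF tope_fin[OF tfa]]])
      then show False using lt by simp
    qed
  qed
  then obtain b where b: "(b,j) \<in> T e" "b \<noteq> a" "b \<notin> fib (f a e) j" by auto
  have br: "b \<in> \<rho>" and be: "b \<noteq> e" using T_edge[OF e b(1)] by auto
  have tfb: "is_tope n d v (\<rho> - {b, e}) (f b e)" using topef[OF br e be] .
  have fbe: "f b e \<subseteq> T e" using fT[OF br e be] .
  have sa: "\<rho> - {a, e} \<subseteq> {0..<n}" using sub2[OF ar e ae] by simp
  have sb: "\<rho> - {b, e} \<subseteq> {0..<n}" using sub2[OF br e be] by simp
  have "is_tope n d (v(j := v j + 1)) (insert a (\<rho> - {a, e})) (insert (a,j) (f a e))"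
    by (rule tope_insert[OF tfa sa]) (use ar rsub j in auto)
  moreover have "insert a (\<rho> - {a, e}) = \<rho> - {e}" using ar ae by auto
  ultimately have tX: "is_tope n d (v(j := v j + 1)) (\<rho> - {e}) (insert (a,j) (f a e))" by simp
  have "is_tope n d (v(j := v j + 1)) (insert b (\<rho> - {b, e})) (insert (b,j) (f b e))"
    by (rule tope_insert[OF tfb sb]) (use br rsub j in auto)
  moreover have "insert b (\<rho> - {b, e}) = \<rho> - {e}" using br be by auto
  ultimately have tY: "is_tope n d (v(j := v j + 1)) (\<rho> - {e}) (insert (b,j) (f b e))" by simp
  have XT: "insert (a,j) (f a e) \<subseteq> T e" using fae a by simp
  have YT: "insert (b,j) (f b e) \<subseteq> T e" using fbe b(1) by simp
  have XY: "insert (a,j) (f a e) = insert (b,j) (f b e)" using uniqT[OF e XT tX YT tY] .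
  have "(b,j) \<in> insert (a,j) (f a e)" using XY by simp
  then show False using b(2,3) unfolding fib_def by simp
qed

lemma no_i: assumes "(l,i) \<in> DD" shows "(l,i) \<in> HH"
proof -
  obtain c where c: "c \<in> \<rho>" and li: "(l,i) \<in> G c" using assms unfolding DD_def by blast
  have "l \<in> N c" using li unfolding N_def fib_def by simp
  then have "l \<in> W" using W_prop c by blast
  then show ?thesis using fibHHi unfolding fib_def by blast
qed

lemma common_N: assumes c: "c \<in> \<rho>" and c': "c' \<in> \<rho>" shows "\<exists>e. e \<in> N c \<and> e \<in> N c'"
proof (cases "c = c'")
  case True
  have "N c \<noteq> {}" using N_props[OF c] by auto
  then show ?thesis using True by auto
next
  case False
  have "fib (f c c') i \<noteq> {}" using fibf_N(2)[OF c c' False] vpos[OF iid] by auto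
  then show ?thesis using fibf_N(1)[OF c c' False] by blast
qed

lemma extra_unique:
  assumes x: "(l,j) \<in> DD - HH" and y: "(l',j) \<in> DD - HH"
  shows "l = l'"
proof (rule ccontr)
  assume ll: "l \<noteq> l'"
  obtain c where c: "c \<in> \<rho>" and lc: "(l,j) \<in> G c" using x unfolding DD_def by blast
  obtain c' where c': "c' \<in> \<rho>" and lc': "(l',j) \<in> G c'" using y unfolding DD_def by blast
  have ji: "j \<noteq> i" using no_i x by blast
  have jd: "j < d" using D_sub x by auto
  obtain e where e: "e \<in> N c" "e \<in> N c'" using common_N[OF c c'] by blast
  have eW: "e \<in> W" using e W_prop c by blast
  have er: "e \<in> \<rho>" using Wr[OF eW] .
  have l1: "(l,j) \<in> T e" using G_in_Te[OF c e(1)] lc ji by auto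
  have l2: "(l',j) \<in> T e" using G_in_Te[OF c' e(2)] lc' ji by auto
  have hsub: "fib HH j \<subseteq> {l. (l,j) \<in> T e}"
  proof
    fix m assume "m \<in> fib HH j"
    then have "(m,j) \<in> HH" by (simp add: fib_def)
    then have "(m,j) \<in> G e" using HH_eq[OF eW] ji by simp
    then show "m \<in> {l. (l,j) \<in> T e}" using GT[OF er] by auto
  qed
  have nl: "l \<notin> fib HH j" "l' \<notin> fib HH j" using x y unfolding fib_def by auto
  have fin: "finite (fib HH j)" using fib_finite[OF finHH] .
  have "insert l (insert l' (fib HH j)) \<subseteq> {l. (l,j) \<in> T e}" using hsub l1 l2 by auto
  moreover have "finite {l. (l,j) \<in> T e}" using fib_finite[OF finT[OF er], of j] unfolding fib_def by simp
  ultimately have "card (insert l (insert l' (fib HH j))) \<le> card {l. (l,j) \<in> T e}"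
    by (rule card_mono[rotated])
  moreover have "card (insert l (insert l' (fib HH j))) = v j + 2"
    using fin nl ll fibHH[OF jd ji] by simp
  ultimately show False using degT[OF er jd] by simp
qed

lemma card_DD: "card DD \<le> kk + 1 + d"
proof -
  have "card HH = card \<rho>" using lfun_card[OF finHH lfunHH] .
  have inj: "inj_on snd (DD - HH)"
  proof (rule inj_onI)
    fix x y assume x: "x \<in> DD - HH" and y: "y \<in> DD - HH" and e: "snd x = snd y"
    obtain l j where xx: "x = (l,j)" by (cases x)
    obtain l' j' where yy: "y = (l',j')" by (cases y)
    have "j = j'" using e xx yy by simp
    then have "l = l'" using extra_unique x y xx yy by blast
    then show "x = y" using xx yy \<open>j = j'\<close> by simp
  qed
  have img: "snd ` (DD - HH) \<subseteq> {0..<d} - {i}"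
  proof
    fix j assume "j \<in> snd ` (DD - HH)"
    then obtain l where lj: "(l,j) \<in> DD - HH" by force
    then have "j < d" using D_sub by auto
    moreover have "j \<noteq> i" using no_i lj by blast
    ultimately show "j \<in> {0..<d} - {i}" by simp
  qed
  have "card (DD - HH) = card (snd ` (DD - HH))" using card_image[OF inj] by simp
  also have "\<dots> \<le> card ({0..<d} - {i})" by (rule card_mono[OF _ img]) simp
  also have "\<dots> = d - 1" using iid by simp
  finally have c1: "card (DD - HH) \<le> d - 1" .
  have "card DD = card HH + card (DD - HH)"
    using card_Diff_subset[OF finHH HH_DD] card_mono[OF finDD HH_DD] by simp
  then show ?thesis using c1 \<open>card HH = card \<rho>\<close> rcard iid by simp
qed

lemma conn_i: assumes c: "c \<in> \<rho>" shows "(Inl c, Inr i) \<in> {(a,b). badj DD a b}\<^sup>*"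
proof -
  define S where "S = (G c - HH) \<union> (HH - G c)"
  have fG: "finite (G c)" using tope_fin[OF topeG[OF c]] .
  have SD: "S \<subseteq> DD" unfolding S_def using HH_DD c unfolding DD_def by blast
  have finS: "finite S" unfolding S_def using fG finHH by simp
  have SP: "S \<subseteq> \<rho> \<times> {0..<d}" using SD D_sub by blast
  have lfG: "lfun (G c) (\<rho> - {c})" using tope_lfun[OF topeG[OF c]] sub1[OF c] by blast
  have lfib: "{r. (l,r) \<in> S} = ({r. (l,r) \<in> G c} - {r. (l,r) \<in> HH}) \<union> ({r. (l,r) \<in> HH} - {r. (l,r) \<in> G c})" for l
    unfolding S_def by auto
  have rfib: "fib S r = (fib (G c) r - fib HH r) \<union> (fib HH r - fib (G c) r)" for r
    unfolding S_def fib_def by auto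
  have ev: "even (card {r. (l,r) \<in> S}) \<longleftrightarrow> even (card {r. (l,r) \<in> G c} + card {r. (l,r) \<in> HH})" for l
    unfolding lfib by (rule even_symdiff[OF lfib_finite[OF fG] lfib_finite[OF finHH]])
  have evr: "even (card (fib S r)) \<longleftrightarrow> even (card (fib (G c) r) + card (fib HH r))" for r
    unfolding rfib by (rule even_symdiff[OF fib_finite[OF fG] fib_finite[OF finHH]])
  have "(Inl c, Inr i) \<in> {(a,b). badj S a b}\<^sup>*"
  proof (rule parity_reach[OF finS SP finr])
    show "finite {0..<d}" by simp
    show "odd (card {r. (c,r) \<in> S})"
      using ev[of c] lfun_card1[OF lfG, of c] lfun_card1[OF lfunHH, of c] c by simp
    show "even (card {r. (l,r) \<in> S})" if "l \<noteq> c" for l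
      using ev[of l] lfun_card1[OF lfG, of l] lfun_card1[OF lfunHH, of l] that by simp
    show "even (card (fib S r))" if "r \<noteq> i" for r
    proof (cases "r < d")
      case True
      then show ?thesis using evr[of r] tope_fib[OF topeG[OF c] True] fibHH[OF True that] that by simp
    next
      case False
      then show ?thesis using evr[of r] tope_fib_out[OF topeG[OF c] False] tope_fib_out[OF topeHH False] by simp
    qed
  qed
  moreover have "{(a,b). badj S a b} \<subseteq> {(a,b). badj DD a b}" using SD unfolding badj_def by blast
  ultimately show ?thesis using rtrancl_mono by blast
qed

lemma rel_sym: "((x,y) \<in> {(a,b). badj DD a b}\<^sup>*) \<Longrightarrow> (y,x) \<in> {(a,b). badj DD a b}\<^sup>*"
proof -
  assume "(x,y) \<in> {(a,b). badj DD a b}\<^sup>*"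
  then have "(y,x) \<in> ({(a,b). badj DD a b}\<inverse>)\<^sup>*" by (simp add: rtrancl_converseI)
  moreover have "{(a,b). badj DD a b}\<inverse> = {(a,b). badj DD a b}" using badj_sym by blast
  ultimately show ?thesis by simp
qed

lemma reach_i: assumes x: "x \<in> VV" shows "(x, Inr i) \<in> {(a,b). badj DD a b}\<^sup>*"
proof -
  consider (L) l where "x = Inl l" "l \<in> \<rho>" | (R) j where "x = Inr j" "j < d" using x unfolding VV_def by auto
  then show ?thesis
  proof cases
    case L then show ?thesis using conn_i by simp
  next
    case R
    have "fib HH j \<noteq> {}"
    proof (cases "j = i")
      case True then show ?thesis using fibHHi W_ne by simp
    next
      case False then show ?thesis using fibHH[OF R(2) False] vpos[OF R(2)] by auto
    qed
    then obtain l where l: "(l,j) \<in> HH" unfolding fib_def by auto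
    then have lr: "l \<in> \<rho>" using lfunHH unfolding lfun_def by blast
    have st: "(Inr j, Inl l) \<in> {(a,b). badj DD a b}" using l HH_DD by auto
    show ?thesis using converse_rtrancl_into_rtrancl[OF st conn_i[OF lr]] R(1) by simp
  qed
qed

lemma darts: "card {(a,b). badj DD a b} = 2 * card DD"
proof -
  let ?A = "(\<lambda>(l,r). (Inl l :: nat + nat, Inr r :: nat + nat)) ` DD"
  let ?B = "(\<lambda>(l,r). (Inr r :: nat + nat, Inl l :: nat + nat)) ` DD"
  have eq: "{(a,b). badj DD a b} = ?A \<union> ?B" unfolding badj_def by force
  have dis: "?A \<inter> ?B = {}" by auto
  have iA: "inj_on (\<lambda>(l,r). (Inl l :: nat + nat, Inr r :: nat + nat)) DD" by (auto simp: inj_on_def)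
  have iB: "inj_on (\<lambda>(l,r). (Inr r :: nat + nat, Inl l :: nat + nat)) DD" by (auto simp: inj_on_def)
  have "card (?A \<union> ?B) = card ?A + card ?B" using dis finDD by (intro card_Un_disjoint) auto
  also have "\<dots> = 2 * card DD" using card_image[OF iA] card_image[OF iB] by simp
  finally show ?thesis using eq by simp
qed

lemma cardVV: "card VV = card \<rho> + d"
proof -
  have "card VV = card (Inl ` \<rho> :: (nat + nat) set) + card (Inr ` {0..<d} :: (nat + nat) set)"
    unfolding VV_def using finr by (intro card_Un_disjoint) auto
  then show ?thesis by (simp add: card_image)
qed

lemma tree_DD: "is_tree_on VV DD"
proof -
  have finVV: "finite VV" unfolding VV_def using finr by simp
  have inV: "badj DD a b \<Longrightarrow> a \<in> VV \<and> b \<in> VV" for a b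
    using D_sub unfolding badj_def VV_def by auto
  have conn: "\<forall>x\<in>VV. \<forall>y\<in>VV. (x,y) \<in> {(a,b). badj DD a b}\<^sup>*"
  proof (intro ballI)
    fix x y assume x: "x \<in> VV" and y: "y \<in> VV"
    have "(x, Inr i) \<in> {(a,b). badj DD a b}\<^sup>*" using reach_i[OF x] .
    moreover have "(Inr i, y) \<in> {(a,b). badj DD a b}\<^sup>*" using rel_sym[OF reach_i[OF y]] .
    ultimately show "(x,y) \<in> {(a,b). badj DD a b}\<^sup>*" by (rule rtrancl_trans)
  qed
  have cnt: "card {(a,b). badj DD a b} < 2 * card VV"
    using darts card_DD cardVV rcard by simp
  have nc: "\<not> has_cycle (badj DD) VV"
  proof (rule conn_count_acyclic[OF finVV])
    show "\<And>a b. badj DD a b \<Longrightarrow> a \<in> VV \<and> b \<in> VV" by (rule inV)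
    show "\<And>a b. badj DD a b \<Longrightarrow> badj DD b a" by (rule badj_sym)
    show "\<And>a. \<not> badj DD a a" by (rule badj_irrefl)
    show "\<forall>x\<in>VV. \<forall>y\<in>VV. (x,y) \<in> {(a,b). badj DD a b}\<^sup>*" by (rule conn)
    show "card {(a,b). badj DD a b} < 2 * card VV" by (rule cnt)
  qed
  have ne: "VV \<noteq> {}" unfolding VV_def using iid by auto
  have edges: "\<forall>(l,r)\<in>DD. Inl l \<in> VV \<and> Inr r \<in> VV" using D_sub unfolding VV_def by auto
  show ?thesis unfolding is_tree_on_def using ne edges conn nc unfolding has_cycle_def by blast
qed

lemma cov_DD: "linkage_covector n d ww Am \<rho> = DD"
proof -
  have "card \<rho> = Suc (thickness d ww)" using rcard thick_ww by simp
  then have "linkage_covector n d ww Am \<rho> = (\<Union>c\<in>\<rho>. Am (\<rho> - {c}))"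
    unfolding linkage_covector_def by (rule union_minus_one[OF finr])
  then show ?thesis unfolding DD_def G_def by simp
qed

lemma tree_result: "is_tree_on (Inl ` \<rho> \<union> Inr ` {0..<d}) (linkage_covector n d ww Am \<rho>)"
  using tree_DD cov_DD unfolding VV_def by simp

end

context LTF
begin

lemma result: "linkage_tope_field n d ww Am"
  unfolding linkage_tope_field_def tope_field_def
proof (intro conjI allI impI)
  show "valid_type n d ww"
    unfolding valid_type_def using vpos sum_ww kn by auto
  fix \<sigma> assume s: "\<sigma> \<subseteq> {0..<n} \<and> card \<sigma> = thickness d ww"
  then show "is_tope n d ww \<sigma> (Am \<sigma>)" using am_prop thick_ww by simp
next
  fix \<tau> assume t: "\<tau> \<subseteq> {0..<n} \<and> card \<tau> = thickness d ww + 1"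
  interpret L2: LTF2 n d v M i \<tau>
    by unfold_locales (use t thick_ww in auto)
  show "is_tree_on (Inl ` \<tau> \<union> Inr ` {0..<d}) (linkage_covector n d ww Am \<tau>)"
    by (rule L2.tree_result)
qed

end

theorem proposition3p15:
  fixes n d i :: nat and v :: "nat \<Rightarrow> nat" and M :: "nat set \<Rightarrow> (nat \<times> nat) set"
  assumes "linkage_tope_field n d v M"
    and "thickness d v < n"
    and "i < d"
  shows "linkage_tope_field n d (v(i := v i + 1)) (amalgamation n d v M i)"
proof -
  interpret L: LTF n d v M i by unfold_locales (use assms in auto)
  show ?thesis using L.result unfolding L.Am_def .
qed

end
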